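(* Let $n\ge3$, $p=\frac{n+2}{n-2}$, $q=\frac n{n-2}$, $c_+>0$. Let $u\in C^2(H)\cap C^1(\overline H)$ satisfy $\Delta u=n(n-2)u^p$, $u>0$ in $H$, and $\frac{\partial u}{\partial t}=-c_+u^q$ on $\partial H$. For $b\in\partial H=\mathbb{R}^{n-1}$ define $u_b(x',t)=u(x'+b,t)$, $v_b(x)=|x|^{2-n}u_b(x/|x|^2)$, for $\lambda>0$ $$w_{\lambda,b}(x)=v_b(x)-\frac{\lambda^{n-2}}{|x|^{n-2}}v_b\Big(\frac{\lambda^2x}{|x|^2}\Big),$$ and $$\lambda_b=\inf\{\lambda>0:\ w_{\mu,b}(x)\ge0 \text{ for all } x\in\overline{B_\mu^+}\setminus\{0\} \text{ and all } \mu\in(\lambda,\infty)\}.$$ If $\lambda_b=0$ for all $b\in\partial H$, then $c_+=n-2$ and $$u(x',t)=u(0,t)=\big(2t+u(0)^{-2/(n-2)}\big)^{-(n-2)/2}\quad\text{for all }(x',t)\in H,$$ where $u(0)$ denotes the value of $u$ at the origin of $\overline H$.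
   Context: $H=\{(x',t): x'\in\mathbb{R}^{n-1}, t>0\}$, $\partial H=\{t=0\}$ identified with $\mathbb{R}^{n-1}$; $B_\mu^+=\{x\in H:|x|<\mu\}$. $\partial u/\partial t$ on $\partial H$ is the derivative in $t$ at $t=0$. *)

theory Defs
  imports "HOL-Analysis.Analysis"
begin

text \<open>Points of R^n = R^(n-1) x R are pairs (x', t) :: 'a \<times> real with
  'a a Euclidean space of dimension n - 1.\<close>

definition upper_half :: "('a::euclidean_space \<times> real) set" where
  "upper_half = {z. snd z > 0}"

definition half_ball :: "real \<Rightarrow> ('a::euclidean_space \<times> real) set" where
  "half_ball \<mu> = {z \<in> upper_half. norm z < \<mu>}"

definition partial :: "('v::real_normed_vector \<Rightarrow> real) \<Rightarrow> 'v \<Rightarrow> 'v \<Rightarrow> real" where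
  "partial u e z = deriv (\<lambda>s. u (z + s *\<^sub>R e)) 0"

definition C1_on :: "'v::euclidean_space set \<Rightarrow> ('v \<Rightarrow> real) \<Rightarrow> bool" where
  "C1_on S u \<longleftrightarrow> continuous_on S u \<and>
     (\<forall>e\<in>Basis. (\<forall>z\<in>S. (\<lambda>s. u (z + s *\<^sub>R e)) differentiable (at 0))
        \<and> continuous_on S (partial u e))"

definition C2_on :: "'v::euclidean_space set \<Rightarrow> ('v \<Rightarrow> real) \<Rightarrow> bool" where
  "C2_on S u \<longleftrightarrow> C1_on S u \<and> (\<forall>e\<in>Basis. C1_on S (partial u e))"

definition C1_closure :: "'v::euclidean_space set \<Rightarrow> ('v \<Rightarrow> real) \<Rightarrow> bool" where
  "C1_closure S u \<longleftrightarrow> C1_on S u \<and> continuous_on (closure S) u \<and>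
     (\<forall>e\<in>Basis. \<exists>g. continuous_on (closure S) g \<and> (\<forall>z\<in>S. g z = partial u e z))"

definition laplacian :: "('v::euclidean_space \<Rightarrow> real) \<Rightarrow> 'v \<Rightarrow> real" where
  "laplacian u z = (\<Sum>e\<in>Basis. partial (partial u e) e z)"

definition dimn :: "'a::euclidean_space itself \<Rightarrow> real" where
  "dimn _ = real (DIM('a) + 1)"

definition shift_u :: "('a::euclidean_space \<times> real \<Rightarrow> real) \<Rightarrow> 'a \<Rightarrow> 'a \<times> real \<Rightarrow> real" where
  "shift_u u b z = u (fst z + b, snd z)"

definition kelvin_v :: "('a::euclidean_space \<times> real \<Rightarrow> real) \<Rightarrow> 'a \<Rightarrow> 'a \<times> real \<Rightarrow> real" where
  "kelvin_v u b x = norm x powr (2 - dimn TYPE('a)) * shift_u u b (x /\<^sub>R (norm x)\<^sup>2)"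

definition w_fun :: "('a::euclidean_space \<times> real \<Rightarrow> real) \<Rightarrow> real \<Rightarrow> 'a \<Rightarrow> 'a \<times> real \<Rightarrow> real" where
  "w_fun u lam b x = kelvin_v u b x
     - lam powr (dimn TYPE('a) - 2) / norm x powr (dimn TYPE('a) - 2)
       * kelvin_v u b ((lam\<^sup>2 / (norm x)\<^sup>2) *\<^sub>R x)"

text \<open>lambda_b as an infimum in the extended reals (inf of the empty set is +infinity).\<close>
definition lambda_b :: "('a::euclidean_space \<times> real \<Rightarrow> real) \<Rightarrow> 'a \<Rightarrow> ereal" where
  "lambda_b u b = Inf (ereal ` {lam. lam > 0 \<and>
      (\<forall>\<mu>. \<mu> > lam \<longrightarrow> (\<forall>x \<in> closure (half_ball \<mu>) - {0}. w_fun u \<mu> b x \<ge> 0))})"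

end

theory Submission
  imports Defs
begin


lemma deriv_lb:
  fixes F F' :: "real \<Rightarrow> real"
  assumes "a \<le> b" "\<And>x. a \<le> x \<Longrightarrow> x \<le> b \<Longrightarrow> (F has_real_derivative F' x) (at x)"
    "\<And>x. a \<le> x \<Longrightarrow> x \<le> b \<Longrightarrow> m \<le> F' x"
  shows "F a + m * (b - a) \<le> F b"
proof (cases "a = b")
  case True then show ?thesis by simp
next
  case False
  then have "a < b" using assms(1) by simp
  from MVT2[OF this assms(2)] obtain z where z: "a < z" "z < b" "F b - F a = (b - a) * F' z" by blast
  have "m * (b - a) \<le> F' z * (b - a)" using assms(3)[of z] z \<open>a<b\<close> by (intro mult_right_mono) auto
  then show ?thesis using z by (simp add: algebra_simps)
qed

lemma deriv_ub:
  fixes F F' :: "real \<Rightarrow> real"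
  assumes "a \<le> b" "\<And>x. a \<le> x \<Longrightarrow> x \<le> b \<Longrightarrow> (F has_real_derivative F' x) (at x)"
    "\<And>x. a \<le> x \<Longrightarrow> x \<le> b \<Longrightarrow> F' x \<le> m"
  shows "F b \<le> F a + m * (b - a)"
proof -
  have "(- F) a + (- m) * (b - a) \<le> (- F) b"
    by (rule deriv_lb[where F'="\<lambda>x. - F' x"]) (use assms in \<open>auto intro: derivative_intros\<close>)
  then show ?thesis by simp
qed

lemma ode:
  fixes f f1 f2 :: "real \<Rightarrow> real" and N c :: real
  assumes N: "N > 0"
    and fpos: "\<And>t. t > 0 \<Longrightarrow> f t > 0"
    and d1: "\<And>t. t > 0 \<Longrightarrow> (f has_real_derivative f1 t) (at t)"
    and d2: "\<And>t. t > 0 \<Longrightarrow> (f1 has_real_derivative f2 t) (at t)"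
    and eq: "\<And>t. t > 0 \<Longrightarrow> f2 t = (N+2)*N * f t powr ((N+4)/N)"
    and bd: "(f has_real_derivative (- c * f 0 powr ((N+2)/N))) (at_right 0)"
  shows "c = N \<and> (\<forall>t>0. f t = (2*t + f 0 powr (-2/N)) powr (-N/2))"
proof -
  define q where "q = (N+2)/N"
  have q1: "q > 1" using N by (simp add: q_def field_simps)
  have pq: "(N+4)/N = 2*q - 1" using N by (simp add: q_def field_simps)
  have f2pos: "f2 t > 0" if "t>0" for t
  proof -
    have "f t powr ((N+4)/N) > 0" using fpos[OF that] by simp
    then show ?thesis unfolding eq[OF that] using N by simp
  qed
  have inc: "f1 s < f1 t" if "0 < s" "s < t" for s t
    by (rule DERIV_pos_imp_increasing[OF that(2)]) (metis d2 f2pos that(1) order_less_le_trans)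
  define P where "P t = f t powr q" for t
  have Ppos: "\<And>t. t>0 \<Longrightarrow> P t > 0" using fpos by (simp add: P_def) (metis less_irrefl)
  define E where "E t = f1 t * f1 t - N^2 * (P t * P t)" for t
  have dE: "(E has_real_derivative 0) (at t)" if t: "t>0" for t
  proof -
    have h: "(P has_real_derivative q * f t powr (q - 1) * f1 t) (at t)"
      using DERIV_fun_powr[OF d1[OF t] fpos[OF t], of q] by (simp add: P_def[abs_def])
    have D: "(E has_real_derivative (f2 t * f1 t + f1 t * f2 t) - N^2 * ((q * f t powr (q - 1) * f1 t) * P t + P t * (q * f t powr (q - 1) * f1 t))) (at t)"
      unfolding E_def[abs_def] by (auto intro!: derivative_eq_intros d2[OF t] h simp: algebra_simps)
    moreover have Z: "(f2 t * f1 t + f1 t * f2 t) - N^2 * ((q * f t powr (q - 1) * f1 t) * P t + P t * (q * f t powr (q - 1) * f1 t)) = 0"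
    proof -
      have a: "P t * f t powr (q-1) = f t powr (2*q-1)" unfolding P_def by (simp add: powr_add[symmetric])
      have b: "N^2 * q = (N+2)*N" using N by (simp add: q_def power2_eq_square field_simps)
      have "(f2 t * f1 t + f1 t * f2 t) - N^2 * ((q * f t powr (q - 1) * f1 t) * P t + P t * (q * f t powr (q - 1) * f1 t))
          = 2 * f1 t * (f2 t - (N^2 * q) * (P t * f t powr (q-1)))" by (simp add: algebra_simps)
      also have "\<dots> = 0" unfolding a b eq[OF t] pq by simp
      finally show ?thesis .
    qed
    ultimately show ?thesis using D unfolding Z by simp
  qed
  obtain E0 where E0: "\<And>t. t>0 \<Longrightarrow> E t = E0"
  proof -
    have "\<exists>c. \<forall>x\<in>{0<..}. E x = c"
      by (rule has_field_derivative_zero_constant) (auto intro: has_field_derivative_at_within dE)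
    then show ?thesis using that by auto
  qed
  have f1sq: "f1 t * f1 t = N^2 * (P t * P t) + E0" if "t>0" for t
    using E0[OF that] unfolding E_def by simp
  define g where "g t = f t powr (-2/N)" for t
  have gpos: "g t > 0" if "t > 0" for t using fpos[OF that] by (simp add: g_def)
  have dg: "(g has_real_derivative (-2/N) * f1 t / P t) (at t)" if t: "t>0" for t
  proof -
    have "(g has_real_derivative (-2/N) * f t powr (-2/N - 1) * f1 t) (at t)"
      using DERIV_fun_powr[OF d1[OF t] fpos[OF t], of "-2/N"] by (simp add: g_def[abs_def])
    moreover have "f t powr (-2/N - 1) = 1 / P t"
    proof -
      have "-2/N - 1 = - q" using N by (simp add: q_def field_simps)
      then show ?thesis by (simp add: P_def powr_minus_divide)
    qed
    ultimately show ?thesis by (simp add: ac_simps)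
  qed
  have f1neg: "f1 t < 0" if t: "t > 0" for t
  proof (rule ccontr)
    assume "\<not> f1 t < 0"
    define T where "T = t + 1"
    define a where "a = f1 T"
    have a: "a > 0" using inc[OF t, of T] \<open>\<not> f1 t < 0\<close> by (simp add: a_def T_def)
    have f1T: "f1 s \<ge> a" if "s \<ge> T" for s
      using inc[of T s] that t by (cases "s = T") (auto simp: a_def T_def)
    have fgrow: "f s \<ge> f T + a * (s - T)" if "s \<ge> T" for s
      by (rule deriv_lb[OF that, where F'=f1]) (use d1 f1T t T_def in auto)
    define K where "K = 2 * \<bar>E0\<bar> / N^2 + 1"
    define T2 where "T2 = T + max 1 K / a"
    have T2: "T2 \<ge> T" using a by (simp add: T2_def)
    have big: "f s \<ge> max 1 K" if "s \<ge> T2" for s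
    proof -
      have "f s \<ge> f T + a * (s - T)" using fgrow[of s] that T2 by simp
      moreover have "a * (s - T) \<ge> max 1 K"
      proof -
        have "s - T \<ge> max 1 K / a" using that by (simp add: T2_def)
        then have "a * (s - T) \<ge> a * (max 1 K / a)" using a by (intro mult_left_mono) auto
        then show ?thesis using a by simp
      qed
      moreover have "f T > 0" using fpos T_def t by simp
      ultimately show ?thesis by linarith
    qed
    have dgle: "(-2/N) * f1 s / P s \<le> -1" if "s \<ge> T2" for s
    proof -
      have s: "s > 0" using that T2 t T_def by simp
      have fs: "f s \<ge> 1" "f s \<ge> K" using big[OF that] by auto
      have "P s \<ge> f s" unfolding P_def using powr_mono[of 1 q "f s"] q1 fs by simp
      then have P1: "P s \<ge> 1" "P s \<ge> K" using fs by auto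
      have "P s * P s \<ge> P s" using P1 by simp
      then have PK: "P s * P s \<ge> K" using P1 by linarith
      have "N^2 * (P s * P s) \<ge> N^2 * K" using PK by (intro mult_left_mono) auto
      moreover have "N^2 * K = 2 * \<bar>E0\<bar> + N^2" using N by (simp add: K_def field_simps)
      ultimately have X: "N^2 * (P s * P s) \<ge> 2 * \<bar>E0\<bar> + N^2" by simp
      have "(N * P s / 2) * (N * P s / 2) = N^2*(P s*P s)/4" by (simp add: power2_eq_square)
      moreover have "N^2 \<ge> 0" by simp
      ultimately have "f1 s * f1 s \<ge> (N * P s / 2) * (N * P s / 2)"
        using f1sq[OF s] X abs_ge_self[of E0] abs_ge_minus_self[of E0] by linarith
      moreover have "f1 s > 0" using inc[OF t, of s] \<open>\<not> f1 t < 0\<close> that T2 T_def by simp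
      moreover have "N * P s / 2 > 0" using N Ppos[OF s] by simp
      ultimately have "f1 s \<ge> N * P s / 2"
        by (metis less_le mult_strict_mono' not_le)
      then have "(2/N) * f1 s / P s \<ge> (2/N) * (N * P s / 2) / P s"
        using N Ppos[OF s] by (intro divide_right_mono mult_left_mono) auto
      also have "(2/N) * (N * P s / 2) / P s = 1" using N Ppos[OF s] by simp
      finally show ?thesis by simp
    qed
    define T3 where "T3 = T2 + g T2 + 1"
    have T2pos: "T2 > 0" using T2 t T_def by simp
    have "g T3 \<le> g T2 + (-1) * (T3 - T2)"
      by (rule deriv_ub[where F'="\<lambda>s. (-2/N) * f1 s / P s"]) (use gpos[OF T2pos] dg dgle T2pos T3_def in auto)
    then have "g T3 < 0" by (simp add: T3_def)
    moreover have "g T3 > 0" using gpos[of T3] gpos[OF T2pos] T2pos by (simp add: T3_def)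
    ultimately show False by simp
  qed
  have E00: "E0 = 0"
  proof (rule ccontr)
    assume "E0 \<noteq> 0"
    then consider "E0 > 0" | "E0 < 0" by linarith
    then show False
    proof cases
      case 1
      have le: "f1 s \<le> - sqrt E0" if s: "s > 0" for s
      proof -
        have "N^2 * (P s * P s) \<ge> 0" by simp
        then have "f1 s * f1 s \<ge> E0" using f1sq[OF s] by linarith
        then have "sqrt E0 \<le> sqrt (f1 s * f1 s)" by (rule real_sqrt_le_mono)
        also have "sqrt (f1 s * f1 s) = - f1 s" using f1neg[OF s] by (simp add: real_sqrt_mult_self)
        finally show ?thesis by simp
      qed
      define t1 where "t1 = 1 + f 1 / sqrt E0 + 1"
      have "f 1 / sqrt E0 > 0" using fpos[of 1] 1 by simp
      then have t1: "t1 \<ge> 1" by (simp add: t1_def)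
      have "f t1 \<le> f 1 + (- sqrt E0) * (t1 - 1)"
        by (rule deriv_ub[OF t1, where F'=f1]) (use d1 le in auto)
      also have "\<dots> = - sqrt E0" using 1 by (simp add: t1_def algebra_simps)
      finally have "f t1 \<le> - sqrt E0" .
      moreover have "sqrt E0 > 0" using 1 by simp
      ultimately have "f t1 < 0" by linarith
      then show False using fpos[of t1] t1 by simp
    next
      case 2
      define m0 where "m0 = - E0 / N^2"
      have m0: "m0 > 0" using 2 N by (simp add: m0_def divide_neg_pos)
      define L where "L = m0 powr (1 / (2*q))"
      have L: "L > 0" using m0 by (simp add: L_def)
      have fL: "f s \<ge> L" if s: "s > 0" for s
      proof -
        have "N^2 * (P s * P s) \<ge> - E0" using f1sq[OF s] by (smt (verit) zero_le_square)
        then have "P s * P s \<ge> m0" using N by (simp add: m0_def field_simps)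
        moreover have "P s * P s = f s powr (2*q)" unfolding P_def by (simp add: powr_add[symmetric])
        ultimately have "m0 \<le> f s powr (2*q)" by simp
        then have "m0 powr (1/(2*q)) \<le> (f s powr (2*q)) powr (1/(2*q))"
          using m0 q1 by (intro powr_mono2) auto
        also have "\<dots> = f s" using q1 fpos[OF s] by (simp add: powr_powr)
        finally show ?thesis by (simp add: L_def)
      qed
      define \<delta> where "\<delta> = (N+2)*N * L powr (2*q-1)"
      have \<delta>: "\<delta> > 0" using N L by (simp add: \<delta>_def)
      have f2ge: "f2 s \<ge> \<delta>" if s: "s > 0" for s
      proof -
        have "L powr (2*q-1) \<le> f s powr (2*q-1)" using fL[OF s] L q1 by (intro powr_mono2) auto
        then show ?thesis unfolding eq[OF s] \<delta>_def pq using N by (intro mult_left_mono) auto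
      qed
      define t1 where "t1 = 1 + (- f1 1) / \<delta> + 1"
      have "(- f1 1) / \<delta> > 0" using f1neg[of 1] \<delta> by (simp add: divide_neg_pos)
      then have t1: "t1 \<ge> 1" by (simp add: t1_def)
      have "f1 1 + \<delta> * (t1 - 1) \<le> f1 t1"
        by (rule deriv_lb[OF t1, where F'=f2]) (use d2 f2ge in auto)
      moreover have "f1 1 + \<delta> * (t1 - 1) = \<delta>" using \<delta> by (simp add: t1_def algebra_simps)
      ultimately show False using f1neg[of t1] t1 \<delta> by simp
    qed
  qed
  have f1eq: "f1 t = - N * P t" if t: "t > 0" for t
  proof -
    have "f1 t * f1 t = (N * P t) * (N * P t)" using f1sq[OF t] E00 by (simp add: power2_eq_square algebra_simps)
    then have "sqrt (f1 t * f1 t) = sqrt ((N * P t) * (N * P t))" by (rule arg_cong)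
    then have "- f1 t = N * P t" using f1neg[OF t] Ppos[OF t] N by (simp add: real_sqrt_mult_self)
    then show ?thesis by simp
  qed
  have dg2: "(g has_real_derivative 2) (at t)" if t: "t > 0" for t
    using dg[OF t] unfolding f1eq[OF t] using N Ppos[OF t] by simp
  obtain a where ga: "\<And>t. t > 0 \<Longrightarrow> g t - 2 * t = a"
  proof -
    have "\<exists>c. \<forall>x\<in>{0<..}. g x - 2 * x = c"
    proof (rule has_field_derivative_zero_constant[where f="\<lambda>x. g x - 2 * x" and s="{0<..}"])
      fix x :: real assume "x \<in> {0<..}"
      then have x: "x > 0" by simp
      have hx: "((\<lambda>x. g x - 2 * x) has_real_derivative 2 - 2 * 1) (at x)"
        using DERIV_diff[OF dg2[OF x] DERIV_cmult[OF DERIV_ident, of 2]] by simp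
      show "((\<lambda>x. g x - 2 * x) has_field_derivative 0) (at x within {0<..})"
        using has_field_derivative_at_within[OF hx] by simp
    qed (rule convex_real_interval(3))
    then show ?thesis using that by auto
  qed
  have fg: "f t = (a + 2 * t) powr (-N/2)" if t: "t > 0" for t
  proof -
    have "g t = a + 2 * t" using ga[OF t] by linarith
    then have "(a + 2 * t) powr (-N/2) = g t powr (-N/2)" by simp
    also have "\<dots> = f t" using N fpos[OF t] by (simp add: g_def powr_powr)
    finally show ?thesis by simp
  qed
  have a0: "a \<ge> 0"
  proof (rule ccontr)
    assume "\<not> a \<ge> 0"
    then have t: "-a/4 > 0" by simp
    have "g (-a/4) - 2 * (-a/4) = a" "g (-a/4) > 0" using ga[OF t] gpos[OF t] by auto
    then show False using \<open>\<not> a \<ge> 0\<close> by linarith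
  qed
  have fc: "(f \<longlongrightarrow> f 0) (at_right 0)"
    using DERIV_continuous[OF bd] by (simp add: continuous_within)
  have ev: "eventually (\<lambda>t. t > 0) (at_right (0::real))" by (rule eventually_at_right_less)
  have apos: "a > 0"
  proof (rule ccontr)
    assume "\<not> a > 0"
    then have a: "a = 0" using a0 by simp
    have l0': "((\<lambda>t. 2 * t) \<longlongrightarrow> 2 * (0::real)) (at_right 0)"
      by (intro tendsto_mult tendsto_const tendsto_ident_at)
    then have l0: "((\<lambda>t. 2 * t) \<longlongrightarrow> (0::real)) (at_right 0)" by simp
    have l1: "((\<lambda>t. (2 * t) powr (N/2)) \<longlongrightarrow> 0) (at_right 0)"
    proof (rule tendsto_zero_powrI[OF l0 tendsto_const])
      show "\<forall>\<^sub>F x in at_right 0. 0 \<le> 2 * (x::real)" using ev by (rule eventually_mono) simp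
    qed (use N in linarith)
    have l2: "((\<lambda>t. f t * (2 * t) powr (N/2)) \<longlongrightarrow> f 0 * 0) (at_right 0)"
      by (rule tendsto_mult[OF fc l1])
    have "eventually (\<lambda>t. f t * (2 * t) powr (N/2) = 1) (at_right 0)"
      using ev
    proof (rule eventually_mono)
      fix t :: real assume t: "t > 0"
      have "f t * (2 * t) powr (N/2) = (2 * t) powr (-N/2) * (2 * t) powr (N/2)" using fg[OF t] a by simp
      also have "\<dots> = (2 * t) powr (-N/2 + N/2)" by (simp only: powr_add)
      also have "\<dots> = 1" using t by simp
      finally show "f t * (2 * t) powr (N/2) = 1" .
    qed
    then have l3: "((\<lambda>t. f t * (2 * t) powr (N/2)) \<longlongrightarrow> 1) (at_right 0)"
      by (rule tendsto_eventually)
    have "f 0 * 0 = (1::real)" using tendsto_unique[OF trivial_limit_at_right_real l2 l3] .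
    then show False by simp
  qed
  have f0: "f 0 = a powr (-N/2)"
  proof -
    have "((\<lambda>t. (a + 2 * t) powr (-N/2)) \<longlongrightarrow> (a + 2 * 0) powr (-N/2)) (at_right 0)"
      using apos by (intro tendsto_intros) auto
    moreover have "eventually (\<lambda>t. (a + 2 * t) powr (-N/2) = f t) (at_right 0)"
      using ev by eventually_elim (simp add: fg)
    ultimately have "(f \<longlongrightarrow> (a + 2 * 0) powr (-N/2)) (at_right 0)"
      by (rule Lim_transform_eventually)
    then show ?thesis using fc tendsto_unique[OF trivial_limit_at_right_real] by auto
  qed
  have f0pos: "f 0 > 0" using apos f0 by simp
  have af0: "f 0 powr (-2/N) = a" using f0 apos N by (simp add: powr_powr)
  have formula: "\<forall>t>0. f t = (2*t + f 0 powr (-2/N)) powr (-N/2)"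
    using fg af0 by (simp add: add.commute)
  define F where "F t = (a + 2 * t) powr (-N/2)" for t
  have dF: "(F has_real_derivative (-N/2) * (a + 2 * 0) powr (-N/2 - 1) * 2) (at 0)"
    unfolding F_def using DERIV_fun_powr[of "\<lambda>t. a + 2 * t" 2 0 "-N/2"] apos
    by (auto intro!: derivative_eq_intros)
  have "((\<lambda>y. (F y - F 0) / (y - 0)) \<longlongrightarrow> (-N/2) * (a + 2 * 0) powr (-N/2 - 1) * 2) (at_right 0)"
    using has_field_derivative_at_within[OF dF, of "{0<..}"] unfolding has_field_derivative_iff .
  moreover have "eventually (\<lambda>y. (F y - F 0) / (y - 0) = (f y - f 0) / (y - 0)) (at_right 0)"
    using ev by eventually_elim (simp add: F_def fg f0)
  ultimately have l1: "((\<lambda>y. (f y - f 0) / (y - 0)) \<longlongrightarrow> (-N/2) * (a + 2 * 0) powr (-N/2 - 1) * 2) (at_right 0)"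
    by (rule Lim_transform_eventually)
  have l2: "((\<lambda>y. (f y - f 0) / (y - 0)) \<longlongrightarrow> - c * f 0 powr ((N+2)/N)) (at_right 0)"
    using bd unfolding has_field_derivative_iff .
  have "- c * f 0 powr ((N+2)/N) = (-N/2) * (a + 2 * 0) powr (-N/2 - 1) * 2"
    using tendsto_unique[OF trivial_limit_at_right_real l2 l1] .
  also have "(a + 2 * 0) powr (-N/2 - 1) = f 0 powr ((N+2)/N)"
  proof -
    have ex: "(-2/N) * (-N/2 - 1) = (N+2)/N" using N by (simp add: field_simps)
    have "(f 0 powr (-2/N)) powr (-N/2 - 1) = f 0 powr ((-2/N) * (-N/2 - 1))" by (rule powr_powr)
    then have "f 0 powr ((N+2)/N) = (f 0 powr (-2/N)) powr (-N/2 - 1)" unfolding ex by simp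
    then show ?thesis using af0 by simp
  qed
  finally have "c * f 0 powr ((N+2)/N) = N * f 0 powr ((N+2)/N)" by simp
  then have "c = N" using f0pos by simp
  then show ?thesis using formula by simp
qed



lemma kelvin_ineq:
  fixes u :: "'a::euclidean_space \<times> real \<Rightarrow> real" and b :: 'a
  assumes lam: "lambda_b u b = 0"
    and z: "snd z > 0" and r: "0 < r" "r < 1"
  shows "r powr (dimn TYPE('a) - 2) * u ((b,0) + r^2 *\<^sub>R (z - (b,0))) \<le> u z"
proof -
  define N where "N = dimn TYPE('a) - 2"
  define S where "S = {lam. lam > 0 \<and>
      (\<forall>\<mu>. \<mu> > lam \<longrightarrow> (\<forall>x \<in> closure (half_ball \<mu>) - {0}. w_fun u \<mu> b x \<ge> 0))}"
  have hprop: "\<forall>x \<in> closure (half_ball \<mu>) - {0}. w_fun u \<mu> b x \<ge> 0" if mu: "\<mu> > 0" for \<mu>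
  proof -
    have "Inf (ereal ` S) < ereal \<mu>" using lam mu unfolding lambda_b_def S_def by simp
    then obtain l where "l \<in> S" "ereal l < ereal \<mu>" by (auto simp: Inf_less_iff)
    then show ?thesis unfolding S_def by auto
  qed
  define B :: "'a \<times> real" where "B = (b, 0)"
  define w where "w = z - B"
  define L where "L = norm w"
  have sw: "snd w = snd z" by (simp add: w_def B_def)
  have "w \<noteq> 0" using z sw by (metis less_irrefl snd_zero)
  then have L: "L > 0" unfolding L_def by simp
  define x where "x = w /\<^sub>R L^2"
  define \<mu> where "\<mu> = 1 / (r * L)"
  have mu: "\<mu> > 0" using r L by (simp add: \<mu>_def)
  have nx: "norm x = 1 / L" using L by (simp add: x_def L_def power2_eq_square field_simps)
  have "x \<in> half_ball \<mu>"
  proof -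
    have "snd x > 0" using z sw L by (simp add: x_def)
    moreover have "norm x < \<mu>" unfolding nx \<mu>_def using r L by (simp add: field_simps)
    ultimately show ?thesis by (simp add: half_ball_def upper_half_def)
  qed
  moreover have "x \<noteq> 0" using nx L by auto
  ultimately have w0: "w_fun u \<mu> b x \<ge> 0" using hprop[OF mu] closure_subset by blast
  have x1: "x /\<^sub>R (norm x)^2 = w" unfolding nx unfolding x_def using L by (simp add: power2_eq_square field_simps)
  define y where "y = (\<mu>^2 / (norm x)^2) *\<^sub>R x"
  have ny: "norm y = 1 / (r^2 * L)" using L r mu
    by (simp add: y_def nx \<mu>_def power2_eq_square field_simps)
  have y1: "y /\<^sub>R (norm y)^2 = r^2 *\<^sub>R w" using L r
    by (simp add: ny y_def nx \<mu>_def x_def power2_eq_square field_simps)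
  define Q where "Q = B + r^2 *\<^sub>R w"
  have k1: "kelvin_v u b x = (1/L) powr (- N) * u z"
    unfolding kelvin_v_def shift_u_def unfolding x1 unfolding nx N_def by (simp add: w_def B_def)
  have eqQ: "Q = (r^2 *\<^sub>R fst w + b, r^2 * snd w)" by (simp add: Q_def B_def prod_eq_iff add.commute)
  have k2: "kelvin_v u b y = (1/(r^2*L)) powr (- N) * u Q"
    unfolding kelvin_v_def shift_u_def unfolding y1 unfolding ny N_def eqQ by simp
  have "w_fun u \<mu> b x = (1/L) powr (- N) * u z - \<mu> powr N / (1/L) powr N * ((1/(r^2*L)) powr (- N) * u Q)"
    unfolding w_fun_def y_def[symmetric] unfolding k1 k2 unfolding nx N_def by simp
  also have "\<dots> = L powr N * u z - L powr N * r powr N * u Q"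
    using L r by (simp add: \<mu>_def powr_minus_divide powr_divide powr_mult power2_eq_square field_simps)
  finally have "0 \<le> L powr N * (u z - r powr N * u Q)" using w0 by (simp add: algebra_simps)
  then have "0 \<le> u z - r powr N * u Q" using L by (simp add: zero_le_mult_iff)
  then show ?thesis by (simp add: N_def Q_def w_def B_def)
qed

lemma open_upper_half: "open (upper_half :: ('a::euclidean_space \<times> real) set)"
  unfolding upper_half_def by (intro open_Collect_less continuous_intros)

lemma mono_shift:
  fixes u :: "'a::euclidean_space \<times> real \<Rightarrow> real" and N t :: real
  assumes A: "\<And>b z r. snd z > 0 \<Longrightarrow> 0 < r \<Longrightarrow> r < 1 \<Longrightarrow>
                 r powr N * u ((b,0) + r^2 *\<^sub>R (z - (b,0))) \<le> u z"
    and cont: "continuous_on upper_half u"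
    and t: "t > 0"
  shows "u (y', t) \<le> u (y' + d, t)"
proof (cases "d = 0")
  case True then show ?thesis by simp
next
  case False
  define D where "D = (norm d)^2"
  have D: "D > 0" using False by (simp add: D_def)
  define M where "M e = (1+e)^2*D + e^2*t^2" for e :: real
  define k where "k e = (1+e)*D / M e" for e
  define c where "c e = - e * t^2 / M e" for e
  have Mpos: "M e > 0" if "e \<ge> 0" for e
  proof -
    have "(1+e)^2*D > 0" using D that by simp
    moreover have "e^2*t^2 \<ge> 0" by simp
    ultimately show ?thesis unfolding M_def by linarith
  qed
  have ev: "eventually (\<lambda>e. e > 0) (at_right (0::real))" by (rule eventually_at_right_less)
  have ineq: "sqrt (k e) powr N * u (y' + c e *\<^sub>R d, k e * t) \<le> u (y' + d, t)" if e: "e > 0" for e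
  proof -
    have M: "M e > 0" using Mpos e by simp
    have k0: "k e > 0" using M D e unfolding k_def by simp
    have k1: "k e < 1"
    proof -
      have "(1+e)*D < (1+e)^2*D" using D e by (simp add: power2_eq_square)
      also have "\<dots> \<le> M e" unfolding M_def by simp
      finally show ?thesis unfolding k_def using M by simp
    qed
    define b where "b = y' - (1/e) *\<^sub>R d"
    define z where "z = (y' + d, t)"
    have sq: "(sqrt (k e))^2 = k e" using k0 by simp
    have key: "-1/e + k e * (1 + 1/e) = c e"
    proof -
      have "-1/e + k e * (1 + 1/e) = ((1+e)^2*D - M e)/(e * M e)"
        using e M by (simp add: k_def field_simps power2_eq_square)
      also have "(1+e)^2*D - M e = - (e^2*t^2)" by (simp add: M_def)
      also have "- (e^2*t^2)/(e*M e) = c e" using e M by (simp add: c_def power2_eq_square field_simps)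
      finally show ?thesis .
    qed
    have "(b,0) + (sqrt (k e))^2 *\<^sub>R (z - (b,0)) = (y' + c e *\<^sub>R d, k e * t)"
    proof -
      have "b + k e *\<^sub>R (y' + d - b) = y' + (-1/e + k e * (1 + 1/e)) *\<^sub>R d"
        unfolding b_def by (simp add: algebra_simps)
      then show ?thesis unfolding sq z_def key by simp
    qed
    moreover have "sqrt (k e) > 0" "sqrt (k e) < 1" using k0 k1 by auto
    ultimately show ?thesis using A[of z "sqrt (k e)" b] t by (simp add: z_def)
  qed
  have kl: "(k \<longlongrightarrow> 1) (at_right 0)"
  proof -
    have "((\<lambda>e. (1+e)*D / ((1+e)^2*D + e^2*t^2)) \<longlongrightarrow> (1+0)*D / ((1+0)^2*D + 0^2*t^2)) (at_right 0)"
      using D by (intro tendsto_intros) auto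
    then show ?thesis using D by (simp add: k_def[abs_def] M_def)
  qed
  have cl: "(c \<longlongrightarrow> 0) (at_right 0)"
  proof -
    have "((\<lambda>e. - e * t^2 / ((1+e)^2*D + e^2*t^2)) \<longlongrightarrow> - 0 * t^2 / ((1+0)^2*D + 0^2*t^2)) (at_right 0)"
      using D by (intro tendsto_intros) auto
    then show ?thesis using D by (simp add: c_def[abs_def] M_def)
  qed
  have ic: "isCont u (y', t)"
    using cont open_upper_half t continuous_on_eq_continuous_at[OF open_upper_half, of u] by (auto simp: upper_half_def)
  have l1: "((\<lambda>e. (y' + c e *\<^sub>R d, k e * t)) \<longlongrightarrow> (y' + 0 *\<^sub>R d, 1 * t)) (at_right 0)"
    by (intro tendsto_intros kl cl)
  have l2: "((\<lambda>e. u (y' + c e *\<^sub>R d, k e * t)) \<longlongrightarrow> u (y', t)) (at_right 0)"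
    using isCont_tendsto_compose[OF _ l1] ic by simp
  have l3: "((\<lambda>e. sqrt (k e) powr N) \<longlongrightarrow> sqrt 1 powr N) (at_right 0)"
    by (intro tendsto_intros kl) simp
  have l4: "((\<lambda>e. sqrt (k e) powr N * u (y' + c e *\<^sub>R d, k e * t)) \<longlongrightarrow> 1 * u (y', t)) (at_right 0)"
    using tendsto_mult[OF l3 l2] by simp
  have "1 * u (y', t) \<le> u (y' + d, t)"
    by (rule tendsto_le[OF trivial_limit_at_right_real tendsto_const l4])
       (use ev in \<open>auto elim: eventually_mono intro: ineq\<close>)
  then show ?thesis by simp
qed

lemma partial_zero:
  fixes u :: "'a::euclidean_space \<times> real \<Rightarrow> real"
  assumes ind: "\<And>x'. u (x', snd w) = c"
    and e: "snd e = 0"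
  shows "partial u e w = 0"
proof -
  have "(\<lambda>s. u (w + s *\<^sub>R e)) = (\<lambda>s. c)"
  proof
    fix s
    have "w + s *\<^sub>R e = (fst w + s *\<^sub>R fst e, snd w)" using e by (simp add: prod_eq_iff)
    then show "u (w + s *\<^sub>R e) = c" using ind by simp
  qed
  then show ?thesis unfolding partial_def by (simp add: DERIV_imp_deriv[OF DERIV_const])
qed

theorem proposition3p3:
  fixes u :: "'a::euclidean_space \<times> real \<Rightarrow> real"
    and cplus :: real
  defines "n \<equiv> real (DIM('a) + 1)"
  assumes n3: "DIM('a) \<ge> 2"
    and cpos: "cplus > 0"
    and reg2: "C2_on upper_half u"
    and reg1: "C1_closure upper_half u"
    and eq: "\<forall>z\<in>upper_half. laplacian u z = n * (n - 2) * u z powr ((n + 2) / (n - 2))"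
    and pos: "\<forall>z\<in>upper_half. u z > 0"
    and bdry: "\<forall>x'::'a. ((\<lambda>t. u (x', t)) has_real_derivative
                 (- cplus * u (x', 0) powr (n / (n - 2)))) (at_right 0)"
    and lam: "\<forall>b::'a. lambda_b u b = 0"
  shows "cplus = n - 2 \<and>
    (\<forall>x'::'a. \<forall>t::real. t > 0 \<longrightarrow>
       u (x', t) = u (0, t) \<and>
       u (0, t) = (2 * t + u (0, 0) powr (- 2 / (n - 2))) powr (- (n - 2) / 2))"
proof -
  have dn: "dimn TYPE('a) = n" by (simp add: dimn_def n_def)
  have N: "n - 2 > 0" using n3 by (simp add: n_def)
  have A: "r powr (n - 2) * u ((b,0) + r^2 *\<^sub>R (z - (b,0))) \<le> u z"
    if "snd z > 0" "0 < r" "r < 1" for b z r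
    using kelvin_ineq[OF lam[rule_format, of b] that] unfolding dn .
  have C1u: "C1_on upper_half u" using reg2 by (simp add: C2_on_def)
  have cont: "continuous_on upper_half u" using C1u by (simp add: C1_on_def)
  have ind: "u (x', t) = u (0, t)" if t: "t > 0" for x' t
  proof -
    have "u (0, t) \<le> u (0 + x', t)" by (rule mono_shift[OF A cont t])
    moreover have "u (x', t) \<le> u (x' + (- x'), t)" by (rule mono_shift[OF A cont t])
    ultimately show ?thesis by simp
  qed
  define e1 :: "'a \<times> real" where "e1 = (0, 1)"
  have e1B: "e1 \<in> Basis" by (simp add: e1_def Basis_prod_def)
  define f where "f t = u (0, t)" for t
  define f1 where "f1 t = partial u e1 (0, t)" for t
  define f2 where "f2 t = partial (partial u e1) e1 (0, t)" for t
  have shift: "(0::'a, t) + s *\<^sub>R e1 = (0, s + t)" for s t by (simp add: e1_def add.commute)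
  have d1: "(f has_real_derivative f1 t) (at t)" if t: "t > 0" for t
  proof -
    have "(0::'a, t) \<in> upper_half" using t by (simp add: upper_half_def)
    then have "(\<lambda>s. u ((0, t) + s *\<^sub>R e1)) differentiable (at 0)" using C1u e1B by (simp add: C1_on_def)
    then have "((\<lambda>s. u ((0, t) + s *\<^sub>R e1)) has_real_derivative f1 t) (at 0)"
      unfolding f1_def partial_def by (simp add: DERIV_deriv_iff_real_differentiable)
    then have "((\<lambda>s. f (s + t)) has_real_derivative f1 t) (at 0)" unfolding shift f_def .
    then show ?thesis using DERIV_shift[of f "f1 t" 0 t] by simp
  qed
  have C1p: "C1_on upper_half (partial u e1)" using reg2 e1B by (simp add: C2_on_def)
  have d2: "(f1 has_real_derivative f2 t) (at t)" if t: "t > 0" for t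
  proof -
    have "(0::'a, t) \<in> upper_half" using t by (simp add: upper_half_def)
    then have "(\<lambda>s. partial u e1 ((0, t) + s *\<^sub>R e1)) differentiable (at 0)" using C1p e1B by (simp add: C1_on_def)
    then have "((\<lambda>s. partial u e1 ((0, t) + s *\<^sub>R e1)) has_real_derivative f2 t) (at 0)"
      unfolding f2_def partial_def[of "partial u e1"] by (simp add: DERIV_deriv_iff_real_differentiable)
    then have "((\<lambda>s. f1 (s + t)) has_real_derivative f2 t) (at 0)" unfolding shift f1_def .
    then show ?thesis using DERIV_shift[of f1 "f2 t" 0 t] by simp
  qed
  have lap: "laplacian u (0, t) = f2 t" if t: "t > 0" for t
  proof -
    have tang: "partial (partial u (b, 0)) (b, 0) (0::'a, t) = 0" for b :: 'a
    proof -
      have "(\<lambda>s. partial u (b, 0) ((0, t) + s *\<^sub>R (b, 0))) = (\<lambda>s. 0)"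
      proof
        fix s
        show "partial u (b, 0) ((0, t) + s *\<^sub>R (b, 0)) = 0"
        proof (rule partial_zero[where c="u (0, t)"])
          fix x' :: 'a
          show "u (x', snd ((0, t) + s *\<^sub>R (b, 0))) = u (0, t)" using ind[OF t, of x'] by simp
        qed simp
      qed
      then show ?thesis unfolding partial_def[of "partial u (b, 0)"] by (simp add: DERIV_imp_deriv[OF DERIV_const])
    qed
    have "laplacian u (0, t) = (\<Sum>b\<in>Basis. partial (partial u (b, 0)) (b, 0) (0::'a, t))
        + (\<Sum>b\<in>(Basis::real set). partial (partial u (0, b)) (0, b) (0::'a, t))"
    proof -
      let ?g = "\<lambda>e. partial (partial u e) e (0::'a, t)"
      have disj: "(\<lambda>u. (u, 0::real)) ` (Basis::'a set) \<inter> (\<lambda>v. (0::'a, v)) ` (Basis::real set) = {}"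
        by auto
      have i1: "inj_on (\<lambda>u. (u, 0::real)) (Basis::'a set)" by (auto simp: inj_on_def)
      have i2: "inj_on (\<lambda>v. (0::'a, v)) (Basis::real set)" by (auto simp: inj_on_def)
      have "laplacian u (0, t) = sum ?g ((\<lambda>u. (u, 0::real)) ` (Basis::'a set) \<union> (\<lambda>v. (0::'a, v)) ` (Basis::real set))"
        unfolding laplacian_def Basis_prod_def ..
      also have "\<dots> = sum ?g ((\<lambda>u. (u, 0::real)) ` (Basis::'a set)) + sum ?g ((\<lambda>v. (0::'a, v)) ` (Basis::real set))"
        by (rule sum.union_disjoint) (use disj in auto)
      also have "\<dots> = (\<Sum>b\<in>Basis. partial (partial u (b, 0)) (b, 0) (0::'a, t))
        + (\<Sum>b\<in>(Basis::real set). partial (partial u (0, b)) (0, b) (0::'a, t))"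
        by (simp add: sum.reindex[OF i1] sum.reindex[OF i2])
      finally show ?thesis .
    qed
    also have "\<dots> = f2 t" using tang by (simp add: f2_def e1_def)
    finally show ?thesis .
  qed
  have fpos: "f t > 0" if "t > 0" for t using pos that by (simp add: f_def upper_half_def)
  have eqf: "f2 t = ((n - 2) + 2) * (n - 2) * f t powr (((n - 2) + 4) / (n - 2))" if t: "t > 0" for t
  proof -
    have "(0::'a, t) \<in> upper_half" using t by (simp add: upper_half_def)
    then have "laplacian u (0, t) = n * (n - 2) * u (0, t) powr ((n + 2) / (n - 2))" using eq by blast
    moreover have h1: "(n - 2) + 2 = n" "(n - 2) + 4 = n + 2" by simp_all
    ultimately show ?thesis using lap[OF t] unfolding h1 by (simp add: f_def)
  qed
  have bd: "(f has_real_derivative (- cplus * f 0 powr (((n - 2) + 2) / (n - 2)))) (at_right 0)"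
  proof -
    have h1: "(n - 2) + 2 = n" by simp
    show ?thesis using bdry[rule_format, of 0] unfolding h1 by (simp add: f_def[abs_def])
  qed
  have res: "cplus = n - 2 \<and> (\<forall>t>0. f t = (2*t + f 0 powr (-2/(n - 2))) powr (-(n - 2)/2))"
    by (rule ode[OF N fpos d1 d2 eqf bd])
  have "\<forall>x'::'a. \<forall>t::real. t > 0 \<longrightarrow>
       u (x', t) = u (0, t) \<and>
       u (0, t) = (2 * t + u (0, 0) powr (- 2 / (n - 2))) powr (- (n - 2) / 2)"
  proof (intro allI impI conjI)
    fix x' :: 'a and t :: real assume t: "t > 0"
    show "u (x', t) = u (0, t)" by (rule ind[OF t])
    show "u (0, t) = (2 * t + u (0, 0) powr (- 2 / (n - 2))) powr (- (n - 2) / 2)"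
      using res t unfolding f_def by blast
  qed
  then show ?thesis using res by blast
qed


end
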